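(* Let $(I,\leq)$ and $(J,\preccurlyeq)$ be finite posets and $\mathcal P\colon J^{\mathrm{op}}\to\mathrm{Fun}(I,\mathrm{vect}_K)$ a thin functor. Then the collection $\{\mathcal P(a)\mid a\in J,\ \mathcal P(a)\neq0\}$ is independent.
   Context: $K$ is a field, $\mathrm{vect}_K$ finite-dimensional $K$-vector spaces, $\mathrm{Fun}(I,\mathrm{vect}_K)$ the category of functors $I\to\mathrm{vect}_K$ with natural transformations (hom sets $\mathrm{Nat}_I$). For $a\in J$, $K(a,-)\colon J\to\mathrm{vect}_K$ is the free functor ($K(a,b)=K$ if $a\preccurlyeq b$, else $0$, identity transitions between nonzero values). $\mathcal R M=\mathrm{Nat}_I(\mathcal P(-),M)$ defines $\mathcal R\colon\mathrm{Fun}(I,\mathrm{vect}_K)\to\mathrm{Fun}(J,\mathrm{vect}_K)$, with left adjoint $\mathcal L$ (given by $\mathcal LF=\mathrm{colim}\big(\bigoplus_{a_0\prec a_1}\mathcal P(a_1)\otimes F(a_0)\rightrightarrows\bigoplus_a\mathcal P(a)\otimes F(a)\big)$), so $\mathcal LK(a,-)\cong\mathcal P(a)$; $\eta_a\colon K(a,-)\to\mathcal R\mathcal LK(a,-)$ is the unit. $\mathcal P$ is thin if each $\eta_a$ is pointwise surjective. For a collection $\mathcal C$ of objects of an abelian category, an object is $\mathcal C$-free if it is isomorphic to a finite direct sum of elements of $\mathcal C$; $\mathcal C$ is independent if for every $\mathcal C$-free object $F$ there is a unique finitely supported function $\beta\colon\mathcal C\to\mathbb N$ with $F\cong\bigoplus_{A\in\mathcal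 C}A^{\beta(A)}$. *)

theory Defs
  imports "Jordan_Normal_Form.Matrix"
begin

text \<open>Functors I -> vect_K for a finite poset I (a type of class order),
  represented concretely: an object is a pair (dimension function, transition maps),
  where the transition map for i <= j is a (dim j x dim i) matrix over K
  (i.e. every finite-dimensional space is K^n).\<close>

type_synonym ('i, 'k) fobj = "('i \<Rightarrow> nat) \<times> ('i \<Rightarrow> 'i \<Rightarrow> 'k mat)"

definition fdim :: "('i, 'k) fobj \<Rightarrow> 'i \<Rightarrow> nat" where
  "fdim M = fst M"

definition fmap :: "('i, 'k) fobj \<Rightarrow> 'i \<Rightarrow> 'i \<Rightarrow> 'k mat" where
  "fmap M = snd M"

definition is_functor :: "('i::order, 'k::field) fobj \<Rightarrow> bool" where
  "is_functor M \<longleftrightarrow>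
     (\<forall>i j. i \<le> j \<longrightarrow> fmap M i j \<in> carrier_mat (fdim M j) (fdim M i)) \<and>
     (\<forall>i. fmap M i i = 1\<^sub>m (fdim M i)) \<and>
     (\<forall>i j k. i \<le> j \<longrightarrow> j \<le> k \<longrightarrow> fmap M j k * fmap M i j = fmap M i k)"

definition is_nat :: "('i::order, 'k::field) fobj \<Rightarrow> ('i, 'k) fobj \<Rightarrow> ('i \<Rightarrow> 'k mat) \<Rightarrow> bool" where
  "is_nat M N \<phi> \<longleftrightarrow>
     (\<forall>i. \<phi> i \<in> carrier_mat (fdim N i) (fdim M i)) \<and>
     (\<forall>i j. i \<le> j \<longrightarrow> \<phi> j * fmap M i j = fmap N i j * \<phi> i)"

definition fiso :: "('i::order, 'k::field) fobj \<Rightarrow> ('i, 'k) fobj \<Rightarrow> bool" where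
  "fiso M N \<longleftrightarrow> (\<exists>\<phi> \<psi>. is_nat M N \<phi> \<and> is_nat N M \<psi> \<and>
     (\<forall>i. \<psi> i * \<phi> i = 1\<^sub>m (fdim M i) \<and> \<phi> i * \<psi> i = 1\<^sub>m (fdim N i)))"

definition fzero :: "('i, 'k::field) fobj" where
  "fzero = (\<lambda>i. 0, \<lambda>i j. 0\<^sub>m 0 0)"

definition is_zero_obj :: "('i::order, 'k::field) fobj \<Rightarrow> bool" where
  "is_zero_obj M \<longleftrightarrow> fiso M fzero"

definition fdsum :: "('i, 'k::field) fobj \<Rightarrow> ('i, 'k) fobj \<Rightarrow> ('i, 'k) fobj" where
  "fdsum M N = (\<lambda>i. fdim M i + fdim N i,
     \<lambda>i j. four_block_mat (fmap M i j) (0\<^sub>m (fdim M j) (fdim N i))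
                          (0\<^sub>m (fdim N j) (fdim M i)) (fmap N i j))"

fun fdsum_list :: "('i, 'k::field) fobj list \<Rightarrow> ('i, 'k) fobj" where
  "fdsum_list [] = fzero"
| "fdsum_list (M # Ms) = fdsum M (fdsum_list Ms)"

definition is_free :: "('i::order, 'k::field) fobj set \<Rightarrow> ('i, 'k) fobj \<Rightarrow> bool" where
  "is_free C F \<longleftrightarrow> is_functor F \<and> (\<exists>xs. set xs \<subseteq> C \<and> fiso F (fdsum_list xs))"

text \<open>F is isomorphic to the direct sum over A in C of A^(beta A) (the order of summands
  being immaterial up to isomorphism, we use any list with the prescribed multiplicities).\<close>
definition decomposes_as :: "('i::order, 'k::field) fobj \<Rightarrow> (('i, 'k) fobj \<Rightarrow> nat) \<Rightarrow> bool" where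
  "decomposes_as F \<beta> \<longleftrightarrow> (\<exists>xs. (\<forall>A. count_list xs A = \<beta> A) \<and> fiso F (fdsum_list xs))"

definition independent :: "('i::order, 'k::field) fobj set \<Rightarrow> bool" where
  "independent C \<longleftrightarrow> (\<forall>F. is_free C F \<longrightarrow>
     (\<exists>!\<beta>. (\<forall>A. A \<notin> C \<longrightarrow> \<beta> A = 0) \<and> finite {A. \<beta> A \<noteq> 0} \<and> decomposes_as F \<beta>))"

text \<open>A functor P : J^op -> Fun(I, vect_K): objects Pobj a, and for a <= b a natural
  transformation Pmap a b : P(b) -> P(a), functorially.\<close>
definition is_op_functor ::
  "('j::order \<Rightarrow> ('i::order, 'k::field) fobj) \<Rightarrow> ('j \<Rightarrow> 'j \<Rightarrow> 'i \<Rightarrow> 'k mat) \<Rightarrow> bool" where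
  "is_op_functor Pobj Pmap \<longleftrightarrow>
     (\<forall>a. is_functor (Pobj a)) \<and>
     (\<forall>a b. a \<le> b \<longrightarrow> is_nat (Pobj b) (Pobj a) (Pmap a b)) \<and>
     (\<forall>a i. Pmap a a i = 1\<^sub>m (fdim (Pobj a) i)) \<and>
     (\<forall>a b c i. a \<le> b \<longrightarrow> b \<le> c \<longrightarrow> Pmap a b i * Pmap b c i = Pmap a c i)"

text \<open>Thinness: the unit eta_a : K(a,-) -> R L K(a,-) = Nat_I(P(-), P(a)) is pointwise
  surjective. Its component at b sends c in K(a,b) = K to c * P(a <= b) if a <= b
  (and K(a,b) = 0 otherwise), so surjectivity says every natural transformation
  P(b) -> P(a) is a scalar multiple of P(a <= b) if a <= b, and is zero otherwise.\<close>
definition thin ::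
  "('j::order \<Rightarrow> ('i::order, 'k::field) fobj) \<Rightarrow> ('j \<Rightarrow> 'j \<Rightarrow> 'i \<Rightarrow> 'k mat) \<Rightarrow> bool" where
  "thin Pobj Pmap \<longleftrightarrow> (\<forall>a b \<phi>. is_nat (Pobj b) (Pobj a) \<phi> \<longrightarrow>
     (if a \<le> b then (\<exists>c. \<forall>i. \<phi> i = c \<cdot>\<^sub>m Pmap a b i)
      else (\<forall>i. \<phi> i = 0\<^sub>m (fdim (Pobj a) i) (fdim (Pobj b) i))))"

end

theory Submission
  imports Defs "Jordan_Normal_Form.Determinant"
begin

definition fcar :: "('i::order, 'k::field) fobj \<Rightarrow> bool" where
  "fcar M \<longleftrightarrow> (\<forall>i j. i \<le> j \<longrightarrow> fmap M i j \<in> carrier_mat (fdim M j) (fdim M i))"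

lemma functor_fcar: "is_functor M \<Longrightarrow> fcar M"
  unfolding is_functor_def fcar_def by auto

lemma fcarD: "fcar M \<Longrightarrow> i \<le> j \<Longrightarrow> fmap M i j \<in> carrier_mat (fdim M j) (fdim M i)"
  unfolding fcar_def by auto

lemma natD1: "is_nat M N \<phi> \<Longrightarrow> \<phi> i \<in> carrier_mat (fdim N i) (fdim M i)"
  unfolding is_nat_def by auto

lemma natD2: "is_nat M N \<phi> \<Longrightarrow> i \<le> j \<Longrightarrow> \<phi> j * fmap M i j = fmap N i j * \<phi> i"
  unfolding is_nat_def by auto

lemma nat_comp:
  assumes M: "fcar M" and N: "fcar N" and L: "fcar L"
    and f: "is_nat M N \<phi>" and g: "is_nat N L \<psi>"
  shows "is_nat M L (\<lambda>i. \<psi> i * \<phi> i)"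
  unfolding is_nat_def
proof (intro conjI allI impI)
  fix i show "\<psi> i * \<phi> i \<in> carrier_mat (fdim L i) (fdim M i)"
    using natD1[OF f] natD1[OF g] by (rule mult_carrier_mat[rotated])
next
  fix i j :: 'a assume ij: "i \<le> j"
  note c = natD1[OF f, of i] natD1[OF f, of j] natD1[OF g, of i] natD1[OF g, of j]
     fcarD[OF M ij] fcarD[OF N ij] fcarD[OF L ij]
  have "\<psi> j * \<phi> j * fmap M i j = \<psi> j * (\<phi> j * fmap M i j)"
    by (rule assoc_mult_mat; fact c)
  also have "\<dots> = \<psi> j * (fmap N i j * \<phi> i)" using natD2[OF f ij] by simp
  also have "\<dots> = (\<psi> j * fmap N i j) * \<phi> i" by (rule assoc_mult_mat[symmetric]; fact c)
  also have "\<dots> = (fmap L i j * \<psi> i) * \<phi> i" using natD2[OF g ij] by simp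
  also have "\<dots> = fmap L i j * (\<psi> i * \<phi> i)" by (rule assoc_mult_mat; fact c)
  finally show "\<psi> j * \<phi> j * fmap M i j = fmap L i j * (\<psi> i * \<phi> i)" .
qed

lemma fiso_sym: "fiso M N \<Longrightarrow> fiso N M"
  unfolding fiso_def by blast

lemma fiso_trans:
  assumes M: "fcar M" and N: "fcar N" and L: "fcar L"
    and "fiso M N" and "fiso N L"
  shows "fiso M L"
proof -
  obtain f g where f: "is_nat M N f" and g: "is_nat N M g"
    and fg: "\<And>i. g i * f i = 1\<^sub>m (fdim M i) \<and> f i * g i = 1\<^sub>m (fdim N i)"
    using assms(4) unfolding fiso_def by blast
  obtain f' g' where f': "is_nat N L f'" and g': "is_nat L N g'"
    and fg': "\<And>i. g' i * f' i = 1\<^sub>m (fdim N i) \<and> f' i * g' i = 1\<^sub>m (fdim L i)"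
    using assms(5) unfolding fiso_def by blast
  show ?thesis unfolding fiso_def
  proof (intro exI conjI allI)
    show "is_nat M L (\<lambda>i. f' i * f i)" by (rule nat_comp[OF M N L f f'])
    show "is_nat L M (\<lambda>i. g i * g' i)" by (rule nat_comp[OF L N M g' g])
  next
    fix i
    note c = natD1[OF f, of i] natD1[OF g, of i] natD1[OF f', of i] natD1[OF g', of i]
    have "g i * g' i * (f' i * f i) = g i * (g' i * (f' i * f i))"
      by (rule assoc_mult_mat; (fact c | rule mult_carrier_mat; fact c))
    also have "\<dots> = g i * ((g' i * f' i) * f i)"
      using c by (simp add: assoc_mult_mat[of "g' i" _ _ "f' i" _ "f i"])
    also have "\<dots> = 1\<^sub>m (fdim M i)" using fg'[of i] fg[of i] c by simp
    finally show "g i * g' i * (f' i * f i) = 1\<^sub>m (fdim M i)" .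
    have "f' i * f i * (g i * g' i) = f' i * (f i * (g i * g' i))"
      by (rule assoc_mult_mat; (fact c | rule mult_carrier_mat; fact c))
    also have "\<dots> = f' i * ((f i * g i) * g' i)"
      using c by (simp add: assoc_mult_mat[of "f i" _ _ "g i" _ "g' i"])
    also have "\<dots> = 1\<^sub>m (fdim L i)" using fg'[of i] fg[of i] c by simp
    finally show "f' i * f i * (g i * g' i) = 1\<^sub>m (fdim L i)" .
  qed
qed


lemma ifmul1: "(if P then 1 else 0) * x = (if P then x else (0::'a::semiring_1))" by simp
lemma ifmul2: "x * (if P then 1 else 0) = (if P then x else (0::'a::semiring_1))" by simp
lemma sum_delta_shift: "(\<Sum>ib = 0..<(n::nat). if a = ib + d then g ib else 0) = (if d \<le> a \<and> a < n + d then g (a - d) else (0::'a::comm_monoid_add))"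
proof -
  have "(\<Sum>ib = 0..<n. if a = ib + d then g ib else 0) = (\<Sum>ib = 0..<n. if ib = a - d \<and> d \<le> a then g ib else 0)"
    by (rule sum.cong[OF refl]) (auto simp del: simp_thms)
  also have "\<dots> = (if d \<le> a \<and> a < n + d then g (a - d) else 0)"
    by (cases "d \<le> a") (auto simp: sum.delta)
  finally show ?thesis .
qed
lemmas msimps = ifmul1 ifmul2 sum_delta_shift sum.delta sum.delta' carrier_matD

definition inl :: "('i, 'k::field) fobj \<Rightarrow> ('i, 'k) fobj \<Rightarrow> 'i \<Rightarrow> 'k mat" where
  "inl M N i = mat (fdim M i + fdim N i) (fdim M i) (\<lambda>(r,c). if r = c then 1 else 0)"
definition inr :: "('i, 'k::field) fobj \<Rightarrow> ('i, 'k) fobj \<Rightarrow> 'i \<Rightarrow> 'k mat" where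
  "inr M N i = mat (fdim M i + fdim N i) (fdim N i) (\<lambda>(r,c). if r = c + fdim M i then 1 else 0)"
definition pl :: "('i, 'k::field) fobj \<Rightarrow> ('i, 'k) fobj \<Rightarrow> 'i \<Rightarrow> 'k mat" where
  "pl M N i = mat (fdim M i) (fdim M i + fdim N i) (\<lambda>(r,c). if r = c then 1 else 0)"
definition pr :: "('i, 'k::field) fobj \<Rightarrow> ('i, 'k) fobj \<Rightarrow> 'i \<Rightarrow> 'k mat" where
  "pr M N i = mat (fdim N i) (fdim M i + fdim N i) (\<lambda>(r,c). if c = r + fdim M i then 1 else 0)"

lemma fdim_fdsum[simp]: "fdim (fdsum M N) i = fdim M i + fdim N i"
  unfolding fdsum_def fdim_def by simp
lemma fmap_fdsum: "fmap (fdsum M N) i j = four_block_mat (fmap M i j) (0\<^sub>m (fdim M j) (fdim N i))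
                          (0\<^sub>m (fdim N j) (fdim M i)) (fmap N i j)"
  unfolding fdsum_def fmap_def fdim_def by simp

lemma fcar_fdsum: "fcar M \<Longrightarrow> fcar N \<Longrightarrow> fcar (fdsum M N)"
  unfolding fcar_def fmap_fdsum by auto

lemma fcar_fzero: "fcar fzero"
  unfolding fcar_def fzero_def fmap_def fdim_def by auto

lemma inl_car: "inl M N i \<in> carrier_mat (fdim M i + fdim N i) (fdim M i)" by (simp add: inl_def)
lemma inr_car: "inr M N i \<in> carrier_mat (fdim M i + fdim N i) (fdim N i)" by (simp add: inr_def)
lemma pl_car: "pl M N i \<in> carrier_mat (fdim M i) (fdim M i + fdim N i)" by (simp add: pl_def)
lemma pr_car: "pr M N i \<in> carrier_mat (fdim N i) (fdim M i + fdim N i)" by (simp add: pr_def)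

lemma inl_nat_eq: "fcar M \<Longrightarrow> fcar N \<Longrightarrow> i \<le> j \<Longrightarrow> inl M N j * fmap M i j = fmap (fdsum M N) i j * inl M N i"
  apply (frule fcarD[of M], assumption)
  apply (frule fcarD[of N], assumption)
  apply (rule eq_matI)
  apply (simp_all add: inl_def fmap_fdsum carrier_matD)
  apply (simp add: scalar_prod_def ifmul1 ifmul2 sum.delta sum.delta' sum_delta_shift carrier_matD)
  done
lemma nat_inl: "fcar M \<Longrightarrow> fcar N \<Longrightarrow> is_nat M (fdsum M N) (inl M N)"
  unfolding is_nat_def by (auto simp: inl_nat_eq inl_car)
lemma inr_nat_eq: "fcar M \<Longrightarrow> fcar N \<Longrightarrow> i \<le> j \<Longrightarrow> inr M N j * fmap N i j = fmap (fdsum M N) i j * inr M N i"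
  apply (frule fcarD[of M], assumption)
  apply (frule fcarD[of N], assumption)
  apply (rule eq_matI)
  apply (simp_all add: inr_def fmap_fdsum carrier_matD)
  apply (simp add: scalar_prod_def ifmul1 ifmul2 sum.delta sum.delta' sum_delta_shift carrier_matD)
  done
lemma nat_inr: "fcar M \<Longrightarrow> fcar N \<Longrightarrow> is_nat N (fdsum M N) (inr M N)"
  unfolding is_nat_def by (auto simp: inr_nat_eq inr_car)
lemma pl_nat_eq: "fcar M \<Longrightarrow> fcar N \<Longrightarrow> i \<le> j \<Longrightarrow> pl M N j * fmap (fdsum M N) i j = fmap M i j * pl M N i"
  apply (frule fcarD[of M], assumption)
  apply (frule fcarD[of N], assumption)
  apply (rule eq_matI)
  apply (simp_all add: pl_def fmap_fdsum carrier_matD)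
  apply (simp add: scalar_prod_def ifmul1 ifmul2 sum.delta sum.delta' sum_delta_shift carrier_matD)
  done
lemma nat_pl: "fcar M \<Longrightarrow> fcar N \<Longrightarrow> is_nat (fdsum M N) M (pl M N)"
  unfolding is_nat_def by (auto simp: pl_nat_eq pl_car)
lemma pr_nat_eq: "fcar M \<Longrightarrow> fcar N \<Longrightarrow> i \<le> j \<Longrightarrow> pr M N j * fmap (fdsum M N) i j = fmap N i j * pr M N i"
  apply (frule fcarD[of M], assumption)
  apply (frule fcarD[of N], assumption)
  apply (rule eq_matI)
  apply (simp_all add: pr_def fmap_fdsum carrier_matD)
  apply (simp add: scalar_prod_def ifmul1 ifmul2 sum.delta sum.delta' sum_delta_shift carrier_matD)
  done
lemma nat_pr: "fcar M \<Longrightarrow> fcar N \<Longrightarrow> is_nat (fdsum M N) N (pr M N)"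
  unfolding is_nat_def by (auto simp: pr_nat_eq pr_car)
lemma pl_inl: "pl M N i * inl M N i = 1\<^sub>m (fdim M i)"
  by (rule eq_matI) (simp_all add: pl_def inl_def scalar_prod_def ifmul1 ifmul2 sum.delta sum.delta' sum_delta_shift)
lemma pr_inr: "pr M N i * inr M N i = 1\<^sub>m (fdim N i)"
  by (rule eq_matI) (simp_all add: pr_def inr_def scalar_prod_def ifmul1 ifmul2 sum.delta sum.delta' sum_delta_shift)
lemma pl_inr: "pl M N i * inr M N i = 0\<^sub>m (fdim M i) (fdim N i)"
  by (rule eq_matI) (simp_all add: pl_def inr_def scalar_prod_def ifmul1 ifmul2 sum.delta sum.delta' sum_delta_shift)
lemma pr_inl: "pr M N i * inl M N i = 0\<^sub>m (fdim N i) (fdim M i)"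
  by (rule eq_matI) (simp_all add: pr_def inl_def scalar_prod_def ifmul1 ifmul2 sum.delta sum.delta' sum_delta_shift)
lemma inl_pl_inr_pr: "inl M N i * pl M N i + inr M N i * pr M N i = 1\<^sub>m (fdim M i + fdim N i)"
  by (rule eq_matI) (auto simp: pr_def inr_def pl_def inl_def scalar_prod_def ifmul1 ifmul2 sum.delta sum.delta' sum_delta_shift)

fun iota :: "('i, 'k::field) fobj list \<Rightarrow> nat \<Rightarrow> 'i \<Rightarrow> 'k mat" where
  "iota [] k i = 0\<^sub>m 0 0"
| "iota (x # xs) 0 i = inl x (fdsum_list xs) i"
| "iota (x # xs) (Suc k) i = inr x (fdsum_list xs) i * iota xs k i"

fun proj :: "('i, 'k::field) fobj list \<Rightarrow> nat \<Rightarrow> 'i \<Rightarrow> 'k mat" where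
  "proj [] k i = 0\<^sub>m 0 0"
| "proj (x # xs) 0 i = pl x (fdsum_list xs) i"
| "proj (x # xs) (Suc k) i = proj xs k i * pr x (fdsum_list xs) i"

lemma fcar_S: "\<forall>x\<in>set xs. fcar x \<Longrightarrow> fcar (fdsum_list xs)"
  by (induction xs) (auto simp: fcar_fzero fcar_fdsum)

lemma nat_iota: "\<forall>x\<in>set xs. fcar x \<Longrightarrow> k < length xs \<Longrightarrow> is_nat (xs ! k) (fdsum_list xs) (iota xs k)"
proof (induction xs arbitrary: k)
  case Nil then show ?case by simp
next
  case (Cons x xs)
  have fx: "fcar x" and fs: "fcar (fdsum_list xs)" using Cons.prems fcar_S by auto
  show ?case
  proof (cases k)
    case 0 then show ?thesis using nat_inl[OF fx fs] by simp
  next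
    case (Suc k')
    have k': "k' < length xs" using Cons.prems Suc by simp
    have "is_nat (xs ! k') (fdsum x (fdsum_list xs)) (\<lambda>i. inr x (fdsum_list xs) i * iota xs k' i)"
      by (rule nat_comp[OF _ fs fcar_fdsum[OF fx fs] Cons.IH[OF _ k'] nat_inr[OF fx fs]])
        (use Cons.prems k' in auto)
    then show ?thesis using Suc by simp
  qed
qed

lemma nat_proj: "\<forall>x\<in>set xs. fcar x \<Longrightarrow> k < length xs \<Longrightarrow> is_nat (fdsum_list xs) (xs ! k) (proj xs k)"
proof (induction xs arbitrary: k)
  case Nil then show ?case by simp
next
  case (Cons x xs)
  have fx: "fcar x" and fs: "fcar (fdsum_list xs)" using Cons.prems fcar_S by auto
  show ?case
  proof (cases k)
    case 0 then show ?thesis using nat_pl[OF fx fs] by simp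
  next
    case (Suc k')
    have k': "k' < length xs" using Cons.prems Suc by simp
    have "is_nat (fdsum x (fdsum_list xs)) (xs ! k') (\<lambda>i. proj xs k' i * pr x (fdsum_list xs) i)"
      by (rule nat_comp[OF fcar_fdsum[OF fx fs] fs _ nat_pr[OF fx fs] Cons.IH[OF _ k']])
        (use Cons.prems k' in auto)
    then show ?thesis using Suc by simp
  qed
qed

lemma proj_iota: "\<forall>x\<in>set xs. fcar x \<Longrightarrow> k < length xs \<Longrightarrow> l < length xs \<Longrightarrow>
  proj xs k i * iota xs l i = (if k = l then 1\<^sub>m (fdim (xs ! k) i) else 0\<^sub>m (fdim (xs ! k) i) (fdim (xs ! l) i))"
proof (induction xs arbitrary: k l)
  case Nil then show ?case by simp
next
  case (Cons x xs)
  have fx: "fcar x" and fs: "fcar (fdsum_list xs)" using Cons.prems fcar_S by auto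
  have fa: "\<forall>x\<in>set xs. fcar x" using Cons.prems by auto
  let ?N = "fdsum_list xs"
  show ?case
  proof (cases k)
    case 0
    show ?thesis
    proof (cases l)
      case 0 then show ?thesis using \<open>k = 0\<close> by (simp add: pl_inl)
    next
      case (Suc l')
      have l': "l' < length xs" using Cons.prems Suc by simp
      have "pl x ?N i * (inr x ?N i * iota xs l' i) = (pl x ?N i * inr x ?N i) * iota xs l' i"
        by (rule assoc_mult_mat[symmetric]; (rule pl_car inr_car natD1[OF nat_iota[OF fa l']]))
      also have "\<dots> = 0\<^sub>m (fdim x i) (fdim (xs ! l') i)"
        using natD1[OF nat_iota[OF fa l'], of i] by (simp add: pl_inr)
      finally show ?thesis using \<open>k = 0\<close> Suc by simp
    qed
  next
    case (Suc k')
    have k': "k' < length xs" using Cons.prems Suc by simp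
    show ?thesis
    proof (cases l)
      case 0
      have "proj xs k' i * pr x ?N i * inl x ?N i = proj xs k' i * (pr x ?N i * inl x ?N i)"
        by (rule assoc_mult_mat; (rule pr_car inl_car natD1[OF nat_proj[OF fa k']]))
      also have "\<dots> = 0\<^sub>m (fdim (xs ! k') i) (fdim x i)"
        using natD1[OF nat_proj[OF fa k'], of i] by (simp add: pr_inl)
      finally show ?thesis using \<open>l = 0\<close> Suc by simp
    next
      case (Suc l')
      have l': "l' < length xs" using Cons.prems Suc by simp
      note c = natD1[OF nat_proj[OF fa k'], of i] natD1[OF nat_iota[OF fa l'], of i]
      have "proj xs k' i * pr x ?N i * (inr x ?N i * iota xs l' i)
          = proj xs k' i * (pr x ?N i * (inr x ?N i * iota xs l' i))"
        by (rule assoc_mult_mat; (rule pr_car c mult_carrier_mat inr_car)+)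
      also have "pr x ?N i * (inr x ?N i * iota xs l' i) = (pr x ?N i * inr x ?N i) * iota xs l' i"
        by (rule assoc_mult_mat[symmetric]; (rule pr_car c inr_car)+)
      also have "\<dots> = iota xs l' i" using c by (simp add: pr_inr)
      finally show ?thesis using Cons.IH[OF fa k' l'] \<open>k = Suc k'\<close> Suc by simp
    qed
  qed
qed

lemma count_list_card: "count_list xs x = card {k. k < length xs \<and> xs ! k = x}"
proof -
  have "count_list xs x = length (filter (\<lambda>y. y = x) xs)" by (induction xs) auto
  then show ?thesis by (simp add: length_filter_conv_card)
qed

lemma card_le_from_pairing:
  fixes a :: "'x \<Rightarrow> 'y \<Rightarrow> 'k::field" and b :: "'y \<Rightarrow> 'x \<Rightarrow> 'k"
  assumes X: "finite X" and Y: "finite Y"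
    and id: "\<And>k k'. k \<in> X \<Longrightarrow> k' \<in> X \<Longrightarrow> (\<Sum>l\<in>Y. b k' l * a l k) = (if k' = k then 1 else 0)"
  shows "card X \<le> card Y"
proof (rule ccontr)
  assume "\<not> card X \<le> card Y"
  define n where "n = card X"
  define p where "p = card Y"
  have pn: "p < n" using \<open>\<not> card X \<le> card Y\<close> by (simp add: n_def p_def)
  obtain fx where fx: "bij_betw fx {0..<n} X" using ex_bij_betw_nat_finite[OF X] n_def by blast
  obtain fy where fy: "bij_betw fy {0..<p} Y" using ex_bij_betw_nat_finite[OF Y] p_def by blast
  define A where "A = mat n n (\<lambda>(r,c). if r < p then a (fy r) (fx c) else 0)"
  define B where "B = mat n n (\<lambda>(r,c). if c < p then b (fx r) (fy c) else 0)"
  have A: "A \<in> carrier_mat n n" and B: "B \<in> carrier_mat n n" by (simp_all add: A_def B_def)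
  have "B * A = 1\<^sub>m n"
  proof (rule eq_matI)
    fix r c assume r: "r < dim_row (1\<^sub>m n)" and c: "c < dim_col (1\<^sub>m n)"
    then have rn: "r < n" and cn: "c < n" by auto
    have "(B * A) $$ (r, c) = (\<Sum>t\<in>{0..<n}. (if t < p then b (fx r) (fy t) else 0) * (if t < p then a (fy t) (fx c) else 0))"
      using rn cn by (simp add: A_def B_def scalar_prod_def)
    also have "\<dots> = (\<Sum>t\<in>{0..<n}. if t < p then b (fx r) (fy t) * a (fy t) (fx c) else 0)"
      by (rule sum.cong[OF refl]) simp
    also have "\<dots> = (\<Sum>t\<in>{0..<p}. b (fx r) (fy t) * a (fy t) (fx c))"
    proof -
      have "{t \<in> {0..<n}. t < p} = {0..<p}" using pn by auto
      then show ?thesis by (simp only: sum.inter_filter[OF finite_atLeastLessThan, symmetric])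
    qed
    also have "\<dots> = (\<Sum>l\<in>Y. b (fx r) l * a l (fx c))"
      by (rule sum.reindex_bij_betw[OF fy])
    also have "\<dots> = (if fx r = fx c then 1 else 0)"
      using id[of "fx c" "fx r"] fx rn cn by (auto simp: bij_betw_def)
    also have "\<dots> = 1\<^sub>m n $$ (r, c)"
      using fx rn cn by (auto simp: bij_betw_def inj_on_def)
    finally show "(B * A) $$ (r, c) = 1\<^sub>m n $$ (r, c)" .
  qed (auto simp: A_def B_def)
  then have AB: "A * B = 1\<^sub>m n" by (rule mat_mult_left_right_inverse[OF B A])
  have n1: "n - 1 < n" "p \<le> n - 1" using pn by auto
  have "(A * B) $$ (n - 1, n - 1) = 0"
    using n1 by (simp add: A_def B_def scalar_prod_def)
  moreover have "(A * B) $$ (n - 1, n - 1) = 1" using AB n1 by simp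
  ultimately show False by simp
qed

lemma smult_one_prod00: "0 < d \<Longrightarrow> ((s1 \<cdot>\<^sub>m 1\<^sub>m d) * (s2 \<cdot>\<^sub>m 1\<^sub>m d)) $$ (0,0) = s1 * (s2::'a::field)"
proof -
  assume d: "0 < d"
  have "((s1 \<cdot>\<^sub>m 1\<^sub>m d) * (s2 \<cdot>\<^sub>m 1\<^sub>m d)) $$ (0,0) = (\<Sum>i = 0..<d. s1 * (if i = 0 then 1 else 0) * (s2 * (if i = 0 then 1 else 0)))"
    using d by (simp add: scalar_prod_def)
  also have "\<dots> = (\<Sum>i = 0..<d. if i = 0 then s1 * s2 else 0)"
    by (rule sum.cong[OF refl]) simp
  also have "\<dots> = s1 * s2" using d by (simp add: sum.delta)
  finally show ?thesis .
qed

lemma zero_prod00_left: "X \<in> carrier_mat q c \<Longrightarrow> 0 < r \<Longrightarrow> 0 < dim_col X \<Longrightarrow> (0\<^sub>m r q * X) $$ (0,0) = (0::'a::field)"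
  by (simp add: scalar_prod_def)

lemma zero_prod00_right: "X \<in> carrier_mat r q \<Longrightarrow> 0 < dim_row X \<Longrightarrow> 0 < c \<Longrightarrow> (X * 0\<^sub>m q c) $$ (0,0) = (0::'a::field)"
  by (simp add: scalar_prod_def)

lemma split4:
  assumes B: "B \<in> carrier_mat r (p + q)" and A: "A \<in> carrier_mat (p + q) c"
    and L1: "L1 \<in> carrier_mat (p + q) p" and P1: "P1 \<in> carrier_mat p (p + q)"
    and L2: "L2 \<in> carrier_mat (p + q) q" and P2: "P2 \<in> carrier_mat q (p + q)"
  shows "B * (L1 * P1 + L2 * P2) * A = (B * L1) * (P1 * (A::'a::field mat)) + (B * L2) * (P2 * A)"
proof -
  have c1: "L1 * P1 \<in> carrier_mat (p+q) (p+q)" "L2 * P2 \<in> carrier_mat (p+q) (p+q)"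
    using mult_carrier_mat[OF L1 P1] mult_carrier_mat[OF L2 P2] by auto
  have BL1: "B * L1 \<in> carrier_mat r p" by (rule mult_carrier_mat[OF B L1])
  have BL2: "B * L2 \<in> carrier_mat r q" by (rule mult_carrier_mat[OF B L2])
  have X: "B * L1 * P1 \<in> carrier_mat r (p+q)" by (rule mult_carrier_mat[OF BL1 P1])
  have Y: "B * L2 * P2 \<in> carrier_mat r (p+q)" by (rule mult_carrier_mat[OF BL2 P2])
  have "B * (L1 * P1 + L2 * P2) = B * (L1 * P1) + B * (L2 * P2)"
    by (rule mult_add_distrib_mat[OF B c1])
  also have "B * (L1 * P1) = B * L1 * P1" by (rule assoc_mult_mat[symmetric, OF B L1 P1])
  also have "B * (L2 * P2) = B * L2 * P2" by (rule assoc_mult_mat[symmetric, OF B L2 P2])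
  finally have e: "B * (L1 * P1 + L2 * P2) * A = (B * L1 * P1 + B * L2 * P2) * A" by (rule arg_cong)
  also have "\<dots> = B * L1 * P1 * A + B * L2 * P2 * A"
    by (rule add_mult_distrib_mat[OF X Y A])
  also have "B * L1 * P1 * A = (B * L1) * (P1 * A)" by (rule assoc_mult_mat[OF BL1 P1 A])
  also have "B * L2 * P2 * A = (B * L2) * (P2 * A)" by (rule assoc_mult_mat[OF BL2 P2 A])
  finally show ?thesis .
qed

context
  fixes Pobj :: "'j::order \<Rightarrow> ('i::order, 'k::field) fobj"
    and Pmap :: "'j \<Rightarrow> 'j \<Rightarrow> 'i \<Rightarrow> 'k mat"
  assumes F: "is_op_functor Pobj Pmap"
    and T: "thin Pobj Pmap"
begin

lemma fcarP: "fcar (Pobj a)"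
  using F unfolding is_op_functor_def by (auto intro: functor_fcar)

lemma natP_scalar:
  assumes g: "is_nat (Pobj m) (Pobj m) \<gamma>" and d: "0 < fdim (Pobj m) i"
  shows "\<gamma> i = (\<gamma> i $$ (0,0)) \<cdot>\<^sub>m 1\<^sub>m (fdim (Pobj m) i)"
proof -
  obtain c where c: "\<And>i. \<gamma> i = c \<cdot>\<^sub>m Pmap m m i" using T g unfolding thin_def by fastforce
  have "Pmap m m i = 1\<^sub>m (fdim (Pobj m) i)" using F unfolding is_op_functor_def by auto
  then have "\<gamma> i = c \<cdot>\<^sub>m 1\<^sub>m (fdim (Pobj m) i)" using c by simp
  moreover then have "\<gamma> i $$ (0,0) = c" using d by simp
  ultimately show ?thesis by simp
qed

lemma natP_zero:
  assumes g: "is_nat (Pobj b) (Pobj a) \<gamma>" and ab: "\<not> a \<le> b"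
  shows "\<gamma> i = 0\<^sub>m (fdim (Pobj a) i) (fdim (Pobj b) i)"
  using T g ab unfolding thin_def by fastforce

end

lemma fdim_fzero[simp]: "fdim fzero i = 0" by (simp add: fzero_def fdim_def)
lemma fmap_fzero[simp]: "fmap fzero i j = 0\<^sub>m 0 0" by (simp add: fzero_def fmap_def)

lemma nonzero_dim:
  assumes nz: "\<not> is_zero_obj M" and M: "fcar M"
  shows "\<exists>i. 0 < fdim M i"
proof (rule ccontr)
  assume "\<not> (\<exists>i. 0 < fdim M i)"
  then have z: "\<And>i. fdim M i = 0" by auto
  have c: "\<And>i j. i \<le> j \<Longrightarrow> fmap M i j \<in> carrier_mat 0 0" using fcarD[OF M] z by metis
  have c2: "\<And>i j. i \<le> j \<Longrightarrow> dim_col (fmap M i j) = 0 \<and> dim_row (fmap M i j) = 0" using c by auto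
  have n1: "is_nat M fzero (\<lambda>i. 0\<^sub>m 0 0)"
    unfolding is_nat_def using z c c2 by (auto intro!: eq_matI)
  have n2: "is_nat fzero M (\<lambda>i. 0\<^sub>m 0 0)"
    unfolding is_nat_def using z c c2 by (auto intro!: eq_matI)
  have "fiso M fzero" unfolding fiso_def
    using n1 n2 z by (auto intro!: exI[of _ "\<lambda>i. 0\<^sub>m 0 0"] eq_matI)
  then show False using nz unfolding is_zero_obj_def by simp
qed

lemma scal_prod00: "X = a \<cdot>\<^sub>m 1\<^sub>m d \<Longrightarrow> Y = b \<cdot>\<^sub>m 1\<^sub>m d \<Longrightarrow> 0 < d \<Longrightarrow> (X * Y) $$ (0,0) = a * (b::'a::field)"
  using smult_one_prod00 by blast

context
  fixes Pobj :: "'j::order \<Rightarrow> ('i::order, 'k::field) fobj"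
    and Pmap :: "'j \<Rightarrow> 'j \<Rightarrow> 'i \<Rightarrow> 'k mat"
  assumes F: "is_op_functor Pobj Pmap"
    and T: "thin Pobj Pmap"
begin

lemma decomp:
  assumes d: "0 < fdim (Pobj m) i0"
  shows "\<forall>y\<in>set ys. \<exists>c. y = Pobj c \<Longrightarrow> is_nat (Pobj m) (fdsum_list ys) \<alpha> \<Longrightarrow>
    is_nat (fdsum_list ys) (Pobj m) \<beta> \<Longrightarrow>
   (\<beta> i0 * \<alpha> i0) $$ (0,0) = (\<Sum>l<length ys. if ys ! l = Pobj m then
      (\<beta> i0 * iota ys l i0) $$ (0,0) * (proj ys l i0 * \<alpha> i0) $$ (0,0) else 0)"
proof (induction ys arbitrary: \<alpha> \<beta>)
  case Nil
  have "\<alpha> i0 \<in> carrier_mat 0 (fdim (Pobj m) i0)" "\<beta> i0 \<in> carrier_mat (fdim (Pobj m) i0) 0"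
    using natD1[OF Nil(2), of i0] natD1[OF Nil(3), of i0] by auto
  then show ?case using d by (simp add: scalar_prod_def)
next
  case (Cons y ys)
  obtain c where yc: "y = Pobj c" using Cons.prems(1) by auto
  let ?N = "fdsum_list ys"
  have fa: "\<forall>x\<in>set ys. fcar x" using Cons.prems(1) fcarP[OF F T] by auto
  have fy: "fcar y" using yc fcarP[OF F T] by simp
  have fN: "fcar ?N" by (rule fcar_S[OF fa])
  have fS: "fcar (fdsum y ?N)" by (rule fcar_fdsum[OF fy fN])
  have fm: "fcar (Pobj m)" by (rule fcarP[OF F T])
  have na: "is_nat (Pobj m) (fdsum y ?N) \<alpha>" using Cons.prems(2) by simp
  have nb: "is_nat (fdsum y ?N) (Pobj m) \<beta>" using Cons.prems(3) by simp
  define dm where "dm = fdim (Pobj m) i0"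
  have dm: "0 < dm" using d dm_def by simp
  have Ca: "\<alpha> i0 \<in> carrier_mat (fdim y i0 + fdim ?N i0) dm" using natD1[OF na, of i0] dm_def by simp
  have Cb: "\<beta> i0 \<in> carrier_mat dm (fdim y i0 + fdim ?N i0)" using natD1[OF nb, of i0] dm_def by simp
  have g1: "is_nat y (Pobj m) (\<lambda>i. \<beta> i * inl y ?N i)" by (rule nat_comp[OF fy fS fm nat_inl[OF fy fN] nb])
  have g2: "is_nat (Pobj m) y (\<lambda>i. pl y ?N i * \<alpha> i)" by (rule nat_comp[OF fm fS fy na nat_pl[OF fy fN]])
  have g3: "is_nat ?N (Pobj m) (\<lambda>i. \<beta> i * inr y ?N i)" by (rule nat_comp[OF fN fS fm nat_inr[OF fy fN] nb])
  have g4: "is_nat (Pobj m) ?N (\<lambda>i. pr y ?N i * \<alpha> i)" by (rule nat_comp[OF fm fS fN na nat_pr[OF fy fN]])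
  have C1: "\<beta> i0 * inl y ?N i0 \<in> carrier_mat dm (fdim y i0)" using natD1[OF g1, of i0] dm_def by simp
  have C2: "pl y ?N i0 * \<alpha> i0 \<in> carrier_mat (fdim y i0) dm" using natD1[OF g2, of i0] dm_def by simp
  have C3: "\<beta> i0 * inr y ?N i0 \<in> carrier_mat dm (fdim ?N i0)" using natD1[OF g3, of i0] dm_def by simp
  have C4: "pr y ?N i0 * \<alpha> i0 \<in> carrier_mat (fdim ?N i0) dm" using natD1[OF g4, of i0] dm_def by simp
  have "\<beta> i0 * \<alpha> i0 = \<beta> i0 * (inl y ?N i0 * pl y ?N i0 + inr y ?N i0 * pr y ?N i0) * \<alpha> i0"
    using Cb by (simp add: inl_pl_inr_pr)
  also have "\<dots> = (\<beta> i0 * inl y ?N i0) * (pl y ?N i0 * \<alpha> i0) + (\<beta> i0 * inr y ?N i0) * (pr y ?N i0 * \<alpha> i0)"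
    by (rule split4[OF Cb Ca inl_car pl_car inr_car pr_car])
  finally have e: "(\<beta> i0 * \<alpha> i0) $$ (0,0) = ((\<beta> i0 * inl y ?N i0) * (pl y ?N i0 * \<alpha> i0)) $$ (0,0)
     + ((\<beta> i0 * inr y ?N i0) * (pr y ?N i0 * \<alpha> i0)) $$ (0,0)"
    using Cb Ca dm by (simp add: carrier_matD)
  have t1: "((\<beta> i0 * inl y ?N i0) * (pl y ?N i0 * \<alpha> i0)) $$ (0,0) =
     (if y = Pobj m then (\<beta> i0 * inl y ?N i0) $$ (0,0) * (pl y ?N i0 * \<alpha> i0) $$ (0,0) else 0)"
  proof (cases "y = Pobj m")
    case True
    have h1: "\<beta> i0 * inl y ?N i0 = ((\<beta> i0 * inl y ?N i0) $$ (0,0)) \<cdot>\<^sub>m 1\<^sub>m dm"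
      using natP_scalar[OF F T g1[unfolded True] d] dm_def True by simp
    have h2: "pl y ?N i0 * \<alpha> i0 = ((pl y ?N i0 * \<alpha> i0) $$ (0,0)) \<cdot>\<^sub>m 1\<^sub>m dm"
      using natP_scalar[OF F T g2[unfolded True] d] dm_def True by simp
    show ?thesis using scal_prod00[OF h1 h2 dm] True by simp
  next
    case False
    then have cm: "c \<noteq> m" using yc by auto
    show ?thesis
    proof (cases "m \<le> c")
      case False
      have "\<beta> i0 * inl y ?N i0 = 0\<^sub>m dm (fdim y i0)"
        using natP_zero[OF F T g1[unfolded yc] False] yc dm_def by simp
      moreover have "0 < dim_col (pl y ?N i0 * \<alpha> i0)" using Ca dm by (simp add: carrier_matD)
      ultimately show ?thesis using zero_prod00_left[OF C2 dm] \<open>y \<noteq> Pobj m\<close> by simp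
    next
      case True
      then have "\<not> c \<le> m" using cm by auto
      then have "pl y ?N i0 * \<alpha> i0 = 0\<^sub>m (fdim y i0) dm"
        using natP_zero[OF F T g2[unfolded yc]] yc dm_def by simp
      moreover have "0 < dim_row (\<beta> i0 * inl y ?N i0)" using Cb dm by (simp add: carrier_matD)
      ultimately show ?thesis using zero_prod00_right[OF C1 _ dm] \<open>y \<noteq> Pobj m\<close> by simp
    qed
  qed
  have t2: "((\<beta> i0 * inr y ?N i0) * (pr y ?N i0 * \<alpha> i0)) $$ (0,0) =
     (\<Sum>l<length ys. if ys ! l = Pobj m then
      (\<beta> i0 * iota (y # ys) (Suc l) i0) $$ (0,0) * (proj (y # ys) (Suc l) i0 * \<alpha> i0) $$ (0,0) else 0)"
  proof -
    have "((\<beta> i0 * inr y ?N i0) * (pr y ?N i0 * \<alpha> i0)) $$ (0,0) =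
     (\<Sum>l<length ys. if ys ! l = Pobj m then
      ((\<beta> i0 * inr y ?N i0) * iota ys l i0) $$ (0,0) * (proj ys l i0 * (pr y ?N i0 * \<alpha> i0)) $$ (0,0) else 0)"
      using Cons.IH[OF _ g4 g3] Cons.prems(1) by simp
    also have "\<dots> = (\<Sum>l<length ys. if ys ! l = Pobj m then
      (\<beta> i0 * iota (y # ys) (Suc l) i0) $$ (0,0) * (proj (y # ys) (Suc l) i0 * \<alpha> i0) $$ (0,0) else 0)"
    proof (rule sum.cong[OF refl])
      fix l assume "l \<in> {..<length ys}"
      then have l: "l < length ys" by simp
      have Ci: "iota ys l i0 \<in> carrier_mat (fdim ?N i0) (fdim (ys ! l) i0)" by (rule natD1[OF nat_iota[OF fa l]])
      have Cp: "proj ys l i0 \<in> carrier_mat (fdim (ys ! l) i0) (fdim ?N i0)" by (rule natD1[OF nat_proj[OF fa l]])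
      have a1: "(\<beta> i0 * inr y ?N i0) * iota ys l i0 = \<beta> i0 * (inr y ?N i0 * iota ys l i0)"
        by (rule assoc_mult_mat[OF Cb inr_car Ci])
      have a2: "proj ys l i0 * (pr y ?N i0 * \<alpha> i0) = (proj ys l i0 * pr y ?N i0) * \<alpha> i0"
        by (rule assoc_mult_mat[symmetric, OF Cp pr_car Ca])
      show "(if ys ! l = Pobj m then
          ((\<beta> i0 * inr y ?N i0) * iota ys l i0) $$ (0,0) * (proj ys l i0 * (pr y ?N i0 * \<alpha> i0)) $$ (0,0) else 0)
        = (if ys ! l = Pobj m then
          (\<beta> i0 * iota (y # ys) (Suc l) i0) $$ (0,0) * (proj (y # ys) (Suc l) i0 * \<alpha> i0) $$ (0,0) else 0)"
        by (simp add: a1 a2)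
    qed
    finally show ?thesis .
  qed
  show ?case
    unfolding e t1 t2 length_Cons sum.lessThan_Suc_shift by simp
qed

end

context
  fixes Pobj :: "'j::order \<Rightarrow> ('i::order, 'k::field) fobj"
    and Pmap :: "'j \<Rightarrow> 'j \<Rightarrow> 'i \<Rightarrow> 'k mat"
  assumes F: "is_op_functor Pobj Pmap"
    and T: "thin Pobj Pmap"
begin

lemma core:
  assumes xs: "\<forall>x\<in>set xs. \<exists>c. x = Pobj c" and ys: "\<forall>y\<in>set ys. \<exists>c. y = Pobj c"
    and f: "is_nat (fdsum_list xs) (fdsum_list ys) \<phi>"
    and g: "is_nat (fdsum_list ys) (fdsum_list xs) \<psi>"
    and inv: "\<And>i. \<psi> i * \<phi> i = 1\<^sub>m (fdim (fdsum_list xs) i)"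
    and nz: "\<not> is_zero_obj (Pobj m)"
  shows "count_list xs (Pobj m) \<le> count_list ys (Pobj m)"
proof -
  obtain i0 where d: "0 < fdim (Pobj m) i0" using nonzero_dim[OF nz fcarP[OF F T]] by blast
  have fax: "\<forall>x\<in>set xs. fcar x" using xs fcarP[OF F T] by auto
  have fay: "\<forall>x\<in>set ys. fcar x" using ys fcarP[OF F T] by auto
  have fSx: "fcar (fdsum_list xs)" by (rule fcar_S[OF fax])
  have fSy: "fcar (fdsum_list ys)" by (rule fcar_S[OF fay])
  have fm: "fcar (Pobj m)" by (rule fcarP[OF F T])
  define X where "X = {k. k < length xs \<and> xs ! k = Pobj m}"
  define Y where "Y = {l. l < length ys \<and> ys ! l = Pobj m}"
  define a where "a l k = (proj ys l i0 * (\<phi> i0 * iota xs k i0)) $$ (0,0)" for l k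
  define b where "b k l = ((proj xs k i0 * \<psi> i0) * iota ys l i0) $$ (0,0)" for k l
  have "card X \<le> card Y"
  proof (rule card_le_from_pairing[of X Y b a])
    show "finite X" unfolding X_def by auto
    show "finite Y" unfolding Y_def by auto
  next
    fix k k' assume k: "k \<in> X" and k': "k' \<in> X"
    have kl: "k < length xs" "xs ! k = Pobj m" using k X_def by auto
    have kl': "k' < length xs" "xs ! k' = Pobj m" using k' X_def by auto
    have na: "is_nat (Pobj m) (fdsum_list ys) (\<lambda>i. \<phi> i * iota xs k i)"
      using nat_comp[OF _ fSx fSy nat_iota[OF fax kl(1)] f] kl fm by simp
    have nb: "is_nat (fdsum_list ys) (Pobj m) (\<lambda>i. proj xs k' i * \<psi> i)"
      using nat_comp[OF fSy fSx _ g nat_proj[OF fax kl'(1)]] kl' fm by simp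
    have D: "((proj xs k' i0 * \<psi> i0) * (\<phi> i0 * iota xs k i0)) $$ (0,0) =
       (\<Sum>l<length ys. if ys ! l = Pobj m then b k' l * a l k else 0)"
      using decomp[OF F T d ys na nb] unfolding a_def b_def by simp
    also have "\<dots> = (\<Sum>l\<in>Y. b k' l * a l k)"
    proof -
      have "Y = {l \<in> {..<length ys}. ys ! l = Pobj m}" unfolding Y_def by auto
      moreover have "(\<Sum>l<length ys. if ys ! l = Pobj m then b k' l * a l k else 0) =
          (\<Sum>l\<in>{l \<in> {..<length ys}. ys ! l = Pobj m}. b k' l * a l k)"
        by (rule sum.inter_filter[OF finite_lessThan, symmetric])
      ultimately show ?thesis by simp
    qed
    finally have D2: "(\<Sum>l\<in>Y. b k' l * a l k) = ((proj xs k' i0 * \<psi> i0) * (\<phi> i0 * iota xs k i0)) $$ (0,0)" by simp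
    have Cp: "proj xs k' i0 \<in> carrier_mat (fdim (Pobj m) i0) (fdim (fdsum_list xs) i0)"
      using natD1[OF nat_proj[OF fax kl'(1)], of i0] kl' by simp
    have Ci: "iota xs k i0 \<in> carrier_mat (fdim (fdsum_list xs) i0) (fdim (Pobj m) i0)"
      using natD1[OF nat_iota[OF fax kl(1)], of i0] kl by simp
    have Cf: "\<phi> i0 \<in> carrier_mat (fdim (fdsum_list ys) i0) (fdim (fdsum_list xs) i0)" by (rule natD1[OF f])
    have Cg: "\<psi> i0 \<in> carrier_mat (fdim (fdsum_list xs) i0) (fdim (fdsum_list ys) i0)" by (rule natD1[OF g])
    have "(proj xs k' i0 * \<psi> i0) * (\<phi> i0 * iota xs k i0) = proj xs k' i0 * (\<psi> i0 * (\<phi> i0 * iota xs k i0))"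
      by (rule assoc_mult_mat[OF Cp Cg mult_carrier_mat[OF Cf Ci]])
    also have "\<psi> i0 * (\<phi> i0 * iota xs k i0) = (\<psi> i0 * \<phi> i0) * iota xs k i0"
      by (rule assoc_mult_mat[symmetric, OF Cg Cf Ci])
    also have "\<dots> = iota xs k i0" using inv[of i0] Ci by simp
    also have "proj xs k' i0 * iota xs k i0 = (if k' = k then 1\<^sub>m (fdim (xs ! k') i0) else 0\<^sub>m (fdim (xs ! k') i0) (fdim (xs ! k) i0))"
      by (rule proj_iota[OF fax kl'(1) kl(1)])
    finally have "((proj xs k' i0 * \<psi> i0) * (\<phi> i0 * iota xs k i0)) $$ (0,0) = (if k' = k then 1 else 0)"
      using kl kl' d by simp
    then show "(\<Sum>l\<in>Y. b k' l * a l k) = (if k' = k then 1 else 0)" using D2 by simp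
  qed
  then show ?thesis unfolding X_def Y_def count_list_card .
qed

end

theorem proposition5p10:
  fixes Pobj :: "'j::{finite, order} \<Rightarrow> ('i::{finite, order}, 'k::field) fobj"
    and Pmap :: "'j \<Rightarrow> 'j \<Rightarrow> 'i \<Rightarrow> 'k mat"
  assumes "is_op_functor Pobj Pmap"
    and "thin Pobj Pmap"
  shows "independent {Pobj a | a. \<not> is_zero_obj (Pobj a)}"
  unfolding independent_def
proof (intro allI impI)
  note F = assms(1) and T = assms(2)
  let ?C = "{Pobj a | a. \<not> is_zero_obj (Pobj a)}"
  fix G assume free: "is_free ?C G"
  then obtain xs where xsC: "set xs \<subseteq> ?C" and iso: "fiso G (fdsum_list xs)" and fG: "is_functor G"
    unfolding is_free_def by blast
  have xsP: "\<forall>x\<in>set xs. \<exists>c. x = Pobj c" using xsC by auto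
  have "\<forall>x\<in>set xs. fcar x" using xsP fcarP[OF F T] by auto
  then have fSx: "fcar (fdsum_list xs)" by (rule fcar_S)
  have fcG: "fcar G" by (rule functor_fcar[OF fG])
  show "\<exists>!\<beta>. (\<forall>A. A \<notin> ?C \<longrightarrow> \<beta> A = 0) \<and> finite {A. \<beta> A \<noteq> 0} \<and> decomposes_as G \<beta>"
  proof (rule ex1I[where a = "count_list xs"], intro conjI)
    show "\<forall>A. A \<notin> ?C \<longrightarrow> count_list xs A = 0"
    proof (intro allI impI)
      fix A assume "A \<notin> ?C"
      then have "A \<notin> set xs" using xsC by blast
      then show "count_list xs A = 0" by (simp add: count_list_0_iff)
    qed
    have "{A. count_list xs A \<noteq> 0} \<subseteq> set xs" by (auto simp: count_list_0_iff)
    then show "finite {A. count_list xs A \<noteq> 0}" by (rule finite_subset) simp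
    show "decomposes_as G (count_list xs)" unfolding decomposes_as_def by (rule exI[of _ xs]) (simp add: iso)
  next
    fix \<beta> assume h: "(\<forall>A. A \<notin> ?C \<longrightarrow> \<beta> A = 0) \<and> finite {A. \<beta> A \<noteq> 0} \<and> decomposes_as G \<beta>"
    then obtain ys where cy: "\<And>A. count_list ys A = \<beta> A" and isoy: "fiso G (fdsum_list ys)"
      unfolding decomposes_as_def by blast
    have h1: "\<forall>A. A \<notin> ?C \<longrightarrow> \<beta> A = 0" using h by (rule conjunct1)
    have ysC: "set ys \<subseteq> ?C"
    proof
      fix A assume "A \<in> set ys"
      then have "count_list ys A \<noteq> 0" by (simp add: count_list_0_iff)
      then have "\<beta> A \<noteq> 0" using cy[of A] by simp
      show "A \<in> ?C"
      proof (rule ccontr)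
        assume "A \<notin> ?C"
        then have "\<beta> A = 0" using h1[rule_format] by simp
        then show False using \<open>\<beta> A \<noteq> 0\<close> by simp
      qed
    qed
    have ysP: "\<forall>x\<in>set ys. \<exists>c. x = Pobj c" using ysC by auto
    have "\<forall>x\<in>set ys. fcar x" using ysP fcarP[OF F T] by auto
    then have fSy: "fcar (fdsum_list ys)" by (rule fcar_S)
    have isoxy: "fiso (fdsum_list xs) (fdsum_list ys)"
      by (rule fiso_trans[OF fSx fcG fSy fiso_sym[OF iso] isoy])
    obtain \<phi> \<psi> where f: "is_nat (fdsum_list xs) (fdsum_list ys) \<phi>" and g: "is_nat (fdsum_list ys) (fdsum_list xs) \<psi>"
      and inv: "\<And>i. \<psi> i * \<phi> i = 1\<^sub>m (fdim (fdsum_list xs) i) \<and> \<phi> i * \<psi> i = 1\<^sub>m (fdim (fdsum_list ys) i)"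
      using isoxy unfolding fiso_def by blast
    show "\<beta> = count_list xs"
    proof
      fix A
      show "\<beta> A = count_list xs A"
      proof (cases "A \<in> ?C")
        case True
        then obtain m where A: "A = Pobj m" and nz: "\<not> is_zero_obj (Pobj m)" by blast
        have "count_list xs A \<le> count_list ys A"
          unfolding A by (rule core[OF F T xsP ysP f g _ nz]) (use inv in blast)
        moreover have "count_list ys A \<le> count_list xs A"
          unfolding A by (rule core[OF F T ysP xsP g f _ nz]) (use inv in blast)
        ultimately show ?thesis using cy[of A] by simp
      next
        case False
        then have "A \<notin> set xs" using xsC by blast
        then have "count_list xs A = 0" by (simp add: count_list_0_iff)
        moreover have "\<beta> A = 0" using h1[rule_format, OF False] .
        ultimately show ?thesis by simp
      qed
    qed
  qed
qed

end
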